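(* Let $\mathcal{K}$ be a Fraïssé class in a finite relational language $\mathcal{L}$, let $\mathbf{K}=\mathrm{Flim}(\mathcal{K})$ have finite big Ramsey degrees, and let $\mathbf{K}^*$ be a recurrent big Ramsey structure for $\mathbf{K}$. Then $\mathbf{K}^*$ interprets an ordering of the underlying set $K$ of $\mathbf{K}$ of order type $\omega$.
   Context: For structures $\mathbf{A},\mathbf{B}$, $\mathrm{Emb}(\mathbf{A},\mathbf{B})$ is the set of embeddings. For $\mathbf{A}\in\mathcal{K}$, the big Ramsey degree $\mathrm{BRD}(\mathbf{A},\mathbf{K})$ is the least $t$ (if it exists) such that for every $r>t$ and every coloring $\chi:\mathrm{Emb}(\mathbf{A},\mathbf{K})\to r$ there is $g\in\mathrm{Emb}(\mathbf{K},\mathbf{K})$ with $|\chi[g\circ\mathrm{Emb}(\mathbf{A},\mathbf{K})]|\le t$. For $\mathcal{L}^*\supseteq\mathcal{L}$ and an $\mathcal{L}^*$-expansion $\mathbf{M}^*$ of $\mathbf{M}$ (same underlying set, $\mathcal{L}$-reduct equal to $\mathbf{M}$), $\mathbf{M}^*(\mathbf{B})$ denotes the set of $\mathcal{L}^*$-expansions of the finite structure $\mathbf{B}$ embeddable in $\mathbf{M}^*$, and for $f\in\mathrm{Emb}(\mathbf{B},\mathbf{M})$, $\mathbf{M}^*\cdot f$ is the unique $\mathbf{B}^*\in\mathbf{M}^*(\mathbf{B})$ with $f\in\mathrm{Emb}(\mathbf{B}^*,\mathbf{M}^* )$. A big Ramsey structure for $\mathbf{K}$ is an expansion $\mathbf{K}^*$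 such that for every $\mathbf{A}\in\mathcal{K}$, $|\mathbf{K}^*(\mathbf{A})|=\mathrm{BRD}(\mathbf{A},\mathbf{K})$ and for every $g\in\mathrm{Emb}(\mathbf{K},\mathbf{K})$ the coloring $f\mapsto\mathbf{K}^*\cdot f$ takes all $|\mathbf{K}^*(\mathbf{A})|$ values on $g\circ\mathrm{Emb}(\mathbf{A},\mathbf{K})$. It is recurrent if $\mathrm{Emb}(\mathbf{K}^*,\mathbf{K}^*\cdot\eta)\ne\emptyset$ for every $\eta\in\mathrm{Emb}(\mathbf{K},\mathbf{K})$, where $\mathbf{K}^*\cdot\eta$ is the expansion of $\mathbf{K}$ pulled back along $\eta$. *)

theory Defs
  imports "HOL-Library.FuncSet" "HOL-Library.Countable_Set"
begin

text \<open>Relational structures: a universe together with an interpretation of every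
relation symbol as a predicate on tuples (lists).  A language is a set of symbols
together with an arity function.\<close>

type_synonym ('a, 'r) struct = "'a set \<times> ('r \<Rightarrow> 'a list \<Rightarrow> bool)"

definition univ :: "('a, 'r) struct \<Rightarrow> 'a set" where
  "univ A = fst A"

definition rel :: "('a, 'r) struct \<Rightarrow> 'r \<Rightarrow> 'a list \<Rightarrow> bool" where
  "rel A = snd A"

definition wf_struct :: "'r set \<Rightarrow> ('r \<Rightarrow> nat) \<Rightarrow> ('a, 'r) struct \<Rightarrow> bool" where
  "wf_struct L ar A \<longleftrightarrow>
     (\<forall>r xs. rel A r xs \<longrightarrow> r \<in> L \<and> length xs = ar r \<and> set xs \<subseteq> univ A)"

definition Emb :: "'r set \<Rightarrow> ('r \<Rightarrow> nat) \<Rightarrow> ('a, 'r) struct \<Rightarrow> ('b, 'r) struct \<Rightarrow> ('a \<Rightarrow> 'b) set" where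
  "Emb L ar A B = {f. f \<in> extensional (univ A) \<and> f ` univ A \<subseteq> univ B \<and> inj_on f (univ A) \<and>
     (\<forall>r\<in>L. \<forall>xs. length xs = ar r \<longrightarrow> set xs \<subseteq> univ A \<longrightarrow>
        (rel A r xs \<longleftrightarrow> rel B r (map f xs)))}"

definition emb_comp :: "('a, 'r) struct \<Rightarrow> ('b \<Rightarrow> 'c) \<Rightarrow> ('a \<Rightarrow> 'b) \<Rightarrow> ('a \<Rightarrow> 'c)" where
  "emb_comp A g f = restrict (g \<circ> f) (univ A)"

definition induced :: "('a, 'r) struct \<Rightarrow> 'a set \<Rightarrow> ('a, 'r) struct" where
  "induced K S = (S, \<lambda>r xs. rel K r xs \<and> set xs \<subseteq> S)"

text \<open>The age of K: finite L-structures embeddable in K (closed under isomorphism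
within the type 'a, which is infinite whenever K is).\<close>
definition age :: "'r set \<Rightarrow> ('r \<Rightarrow> nat) \<Rightarrow> ('a, 'r) struct \<Rightarrow> ('a, 'r) struct set" where
  "age L ar K = {A. wf_struct L ar A \<and> finite (univ A) \<and> Emb L ar A K \<noteq> {}}"

definition ultrahomogeneous :: "'r set \<Rightarrow> ('r \<Rightarrow> nat) \<Rightarrow> ('a, 'r) struct \<Rightarrow> bool" where
  "ultrahomogeneous L ar K \<longleftrightarrow>
     (\<forall>S. finite S \<longrightarrow> S \<subseteq> univ K \<longrightarrow>
        (\<forall>p \<in> Emb L ar (induced K S) K.
           \<exists>\<sigma> \<in> Emb L ar K K. \<sigma> ` univ K = univ K \<and> (\<forall>x\<in>S. \<sigma> x = p x)))"

text \<open>K is the Fraisse limit of a Fraisse class (namely of its age): a countably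
infinite ultrahomogeneous L-structure.\<close>
definition fraisse_limit :: "'r set \<Rightarrow> ('r \<Rightarrow> nat) \<Rightarrow> ('a, 'r) struct \<Rightarrow> bool" where
  "fraisse_limit L ar K \<longleftrightarrow>
     wf_struct L ar K \<and> countable (univ K) \<and> infinite (univ K) \<and> ultrahomogeneous L ar K"

definition brd_bound :: "'r set \<Rightarrow> ('r \<Rightarrow> nat) \<Rightarrow> ('a, 'r) struct \<Rightarrow> ('a, 'r) struct \<Rightarrow> nat \<Rightarrow> bool" where
  "brd_bound L ar A K t \<longleftrightarrow>
     (\<forall>r > t. \<forall>\<chi> :: ('a \<Rightarrow> 'a) \<Rightarrow> nat. \<chi> ` Emb L ar A K \<subseteq> {..<r} \<longrightarrow>
        (\<exists>g \<in> Emb L ar K K. card (\<chi> ` (emb_comp A g ` Emb L ar A K)) \<le> t))"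

definition BRD :: "'r set \<Rightarrow> ('r \<Rightarrow> nat) \<Rightarrow> ('a, 'r) struct \<Rightarrow> ('a, 'r) struct \<Rightarrow> nat" where
  "BRD L ar A K = (LEAST t. brd_bound L ar A K t)"

definition finite_BRDs :: "'r set \<Rightarrow> ('r \<Rightarrow> nat) \<Rightarrow> ('a, 'r) struct \<Rightarrow> bool" where
  "finite_BRDs L ar K \<longleftrightarrow> (\<forall>A \<in> age L ar K. \<exists>t. brd_bound L ar A K t)"

definition is_expansion :: "'r set \<Rightarrow> ('r \<Rightarrow> nat) \<Rightarrow> 'r set \<Rightarrow> ('a, 'r) struct \<Rightarrow> ('a, 'r) struct \<Rightarrow> bool" where
  "is_expansion L ar Ls Bs B \<longleftrightarrow>
     wf_struct Ls ar Bs \<and> univ Bs = univ B \<and> (\<forall>r\<in>L. \<forall>xs. rel Bs r xs = rel B r xs)"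

definition exps :: "'r set \<Rightarrow> ('r \<Rightarrow> nat) \<Rightarrow> 'r set \<Rightarrow> ('a, 'r) struct \<Rightarrow> ('a, 'r) struct \<Rightarrow> ('a, 'r) struct set" where
  "exps L ar Ls Ks B = {Bs. is_expansion L ar Ls Bs B \<and> Emb Ls ar Bs Ks \<noteq> {}}"

definition exp_dot :: "'r set \<Rightarrow> ('r \<Rightarrow> nat) \<Rightarrow> ('b, 'r) struct \<Rightarrow> ('a, 'r) struct \<Rightarrow> ('a \<Rightarrow> 'b) \<Rightarrow> ('a, 'r) struct" where
  "exp_dot Ls ar Ks B f =
     (univ B, \<lambda>r xs. r \<in> Ls \<and> length xs = ar r \<and> set xs \<subseteq> univ B \<and> rel Ks r (map f xs))"

definition big_ramsey_structure :: "'r set \<Rightarrow> ('r \<Rightarrow> nat) \<Rightarrow> 'r set \<Rightarrow> ('a, 'r) struct \<Rightarrow> ('a, 'r) struct \<Rightarrow> bool" where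
  "big_ramsey_structure L ar Ls K Ks \<longleftrightarrow>
     is_expansion L ar Ls Ks K \<and>
     (\<forall>A \<in> age L ar K.
        card (exps L ar Ls Ks A) = BRD L ar A K \<and>
        (\<forall>g \<in> Emb L ar K K.
           card ((\<lambda>f. exp_dot Ls ar Ks A f) ` (emb_comp A g ` Emb L ar A K)) = card (exps L ar Ls Ks A)))"

definition recurrent :: "'r set \<Rightarrow> ('r \<Rightarrow> nat) \<Rightarrow> 'r set \<Rightarrow> ('a, 'r) struct \<Rightarrow> ('a, 'r) struct \<Rightarrow> bool" where
  "recurrent L ar Ls K Ks \<longleftrightarrow>
     (\<forall>\<eta> \<in> Emb L ar K K. Emb Ls ar Ks (exp_dot Ls ar Ks K \<eta>) \<noteq> {})"

text \<open>Ks interprets an ordering of its universe of order type omega: there is a strict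
order less, isomorphic via an enumeration h to (nat, <), which is quantifier-free
definable in Ks from pairs, i.e. whether less a b holds depends only on the
Ks-isomorphism type of the pair (a,b).\<close>
definition interprets_omega_order :: "'r set \<Rightarrow> ('a, 'r) struct \<Rightarrow> bool" where
  "interprets_omega_order Ls Ks \<longleftrightarrow>
     (\<exists>less :: 'a \<Rightarrow> 'a \<Rightarrow> bool.
        (\<exists>h :: nat \<Rightarrow> 'a. bij_betw h UNIV (univ Ks) \<and> (\<forall>i j. i < j \<longleftrightarrow> less (h i) (h j))) \<and>
        (\<forall>a\<in>univ Ks. \<forall>b\<in>univ Ks. \<forall>c\<in>univ Ks. \<forall>d\<in>univ Ks.
           ((a = b) \<longleftrightarrow> (c = d)) \<and>
           (\<forall>r\<in>Ls. \<forall>xs. set xs \<subseteq> {a, b} \<longrightarrow>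
               (rel Ks r xs \<longleftrightarrow> rel Ks r (map (\<lambda>x. if x = a then c else d) xs)))
           \<longrightarrow> (less a b \<longleftrightarrow> less c d)))"

end

theory Submission
  imports Defs "HOL-Library.Infinite_Set"
begin

lemma omega_lemma:
  fixes \<phi> :: "'a \<Rightarrow> nat"
  assumes "infinite S" "inj_on \<phi> S"
  obtains h :: "nat \<Rightarrow> 'a" where "bij_betw h UNIV S" "\<forall>i j. i < j \<longleftrightarrow> \<phi> (h i) < \<phi> (h j)"
proof -
  have inf: "infinite (\<phi> ` S)"
  proof
    assume "finite (\<phi> ` S)"
    then have "finite S" using finite_imageD[OF _ assms(2)] by blast
    then show False using assms(1) by contradiction
  qed
  define h where "h = inv_into S \<phi> \<circ> enumerate (\<phi> ` S)"
  have b1: "bij_betw (enumerate (\<phi> ` S)) UNIV (\<phi> ` S)" using bij_enumerate[OF inf] .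
  have b2: "bij_betw (inv_into S \<phi>) (\<phi> ` S) S"
    using bij_betw_inv_into[of \<phi> S "\<phi> ` S"] assms(2) by (simp add: bij_betw_def)
  have bh: "bij_betw h UNIV S" unfolding h_def using bij_betw_trans[OF b1 b2] .
  have ph:  "\<phi> (h i) = enumerate (\<phi> ` S) i" for i
  proof -
    have "enumerate (\<phi> ` S) i \<in> \<phi> ` S" using b1 unfolding bij_betw_def by blast
    then show ?thesis unfolding h_def comp_def by (rule f_inv_into_f)
  qed
  have "\<forall>i j. i < j \<longleftrightarrow> \<phi> (h i) < \<phi> (h j)"
    unfolding ph using enumerate_mono_iff[OF inf] by simp
  then show ?thesis using bh that by blast
qed

lemma emb_comp_Emb:
  assumes f: "f \<in> Emb L ar A B" and g: "g \<in> Emb L ar B C"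
  shows "emb_comp A g f \<in> Emb L ar A C"
proof -
  have m: "map (emb_comp A g f) xs = map g (map f xs)" if "set xs \<subseteq> univ A" for xs
    using that by (auto simp: emb_comp_def)
  have fi: "f ` univ A \<subseteq> univ B" "inj_on f (univ A)" using f by (auto simp: Emb_def)
  have gi: "g ` univ B \<subseteq> univ C" "inj_on g (univ B)" using g by (auto simp: Emb_def)
  have "inj_on (g \<circ> f) (univ A)" using fi gi by (meson comp_inj_on inj_on_subset)
  then have inj: "inj_on (emb_comp A g f) (univ A)" by (simp add: emb_comp_def inj_on_def)
  have img: "emb_comp A g f ` univ A \<subseteq> univ C" using fi gi by (auto simp: emb_comp_def)
  have rels: "rel A r xs \<longleftrightarrow> rel C r (map (emb_comp A g f) xs)"
    if "r \<in> L" "length xs = ar r" "set xs \<subseteq> univ A" for r xs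
  proof -
    have "rel A r xs \<longleftrightarrow> rel B r (map f xs)" using f that by (auto simp: Emb_def)
    also have "\<dots> \<longleftrightarrow> rel C r (map g (map f xs))"
    proof -
      have "set (map f xs) \<subseteq> univ B" using that(3) fi(1) by auto
      then show ?thesis using g that(1,2) unfolding Emb_def by auto
    qed
    finally show ?thesis by (simp only: m[OF that(3)])
  qed
  show ?thesis unfolding Emb_def using inj img rels by (simp add: emb_comp_def)
qed

lemma id_Emb: "restrict id (univ K) \<in> Emb L ar K K"
proof -
  have "map (restrict id (univ K)) xs = xs" if "set xs \<subseteq> univ K" for xs
    using that by (induction xs) auto
  then show ?thesis unfolding Emb_def by (auto simp: inj_on_def)
qed

lemma emb_comp_assoc:
  assumes "f ` univ A \<subseteq> univ K"
  shows "emb_comp A (emb_comp K g g') f = emb_comp A g (emb_comp A g' f)"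
  using assms by (auto simp: emb_comp_def restrict_def fun_eq_iff)

lemma Emb_img: "f \<in> Emb L ar A B \<Longrightarrow> f ` univ A \<subseteq> univ B"
  by (simp add: Emb_def)

lemma exp_dot_in_exps:
  assumes LLs: "L \<subseteq> Ls" and exK: "is_expansion L ar Ls Ks K" and wfA: "wf_struct L ar A"
    and f: "f \<in> Emb L ar A K"
  shows "exp_dot Ls ar Ks A f \<in> exps L ar Ls Ks A"
proof -
  have fi: "f ` univ A \<subseteq> univ K" "inj_on f (univ A)" "f \<in> extensional (univ A)"
    using f by (auto simp: Emb_def)
  have uK: "univ Ks = univ K" using exK by (simp add: is_expansion_def)
  have u: "univ (exp_dot Ls ar Ks A f) = univ A" by (simp add: exp_dot_def univ_def)
  have r: "rel (exp_dot Ls ar Ks A f) r xs \<longleftrightarrow>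
      r \<in> Ls \<and> length xs = ar r \<and> set xs \<subseteq> univ A \<and> rel Ks r (map f xs)" for r xs
    by (simp add: exp_dot_def rel_def univ_def)
  have wf: "wf_struct Ls ar (exp_dot Ls ar Ks A f)"
    unfolding wf_struct_def u r by auto
  have L: "rel (exp_dot Ls ar Ks A f) r xs = rel A r xs" if "r \<in> L" for r xs
  proof -
    have "r \<in> Ls" using LLs that by auto
    show ?thesis
    proof (cases "length xs = ar r \<and> set xs \<subseteq> univ A")
      case True
      have "rel A r xs \<longleftrightarrow> rel K r (map f xs)" using f True that by (auto simp: Emb_def)
      also have "\<dots> \<longleftrightarrow> rel Ks r (map f xs)" using exK that by (simp add: is_expansion_def)
      finally show ?thesis using True \<open>r \<in> Ls\<close> unfolding r by simp
    next
      case False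
      then show ?thesis using wfA unfolding r wf_struct_def by auto
    qed
  qed
  have "f \<in> Emb Ls ar (exp_dot Ls ar Ks A f) Ks"
    unfolding Emb_def using fi uK by (auto simp: u r)
  then show ?thesis unfolding exps_def is_expansion_def using wf u L by auto
qed

definition good where
  "good L ar Ls K Ks P A g \<longleftrightarrow>
    (\<forall>f1\<in>Emb L ar A K. \<forall>f2\<in>Emb L ar A K.
       exp_dot Ls ar Ks A (emb_comp A g f1) = exp_dot Ls ar Ks A (emb_comp A g f2) \<longrightarrow>
       (P (emb_comp A g f1) \<longleftrightarrow> P (emb_comp A g f2)))"

lemma good_comp:
  assumes "good L ar Ls K Ks P A g" "g' \<in> Emb L ar K K"
  shows "good L ar Ls K Ks P A (emb_comp K g g')"
  unfolding good_def
proof (intro ballI impI)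
  fix f1 f2 assume f: "f1 \<in> Emb L ar A K" "f2 \<in> Emb L ar A K"
    and e: "exp_dot Ls ar Ks A (emb_comp A (emb_comp K g g') f1) =
            exp_dot Ls ar Ks A (emb_comp A (emb_comp K g g') f2)"
  have c: "emb_comp A g' f1 \<in> Emb L ar A K" "emb_comp A g' f2 \<in> Emb L ar A K"
    using f assms(2) emb_comp_Emb by blast+
  have a: "emb_comp A (emb_comp K g g') f1 = emb_comp A g (emb_comp A g' f1)"
          "emb_comp A (emb_comp K g g') f2 = emb_comp A g (emb_comp A g' f2)"
    by (rule emb_comp_assoc[OF Emb_img[OF f(1)]], rule emb_comp_assoc[OF Emb_img[OF f(2)]])
  have e': "exp_dot Ls ar Ks A (emb_comp A g (emb_comp A g' f1)) =
            exp_dot Ls ar Ks A (emb_comp A g (emb_comp A g' f2))" using e unfolding a .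
  have "P (emb_comp A g (emb_comp A g' f1)) = P (emb_comp A g (emb_comp A g' f2))"
    using assms(1) c e' unfolding good_def by blast
  then show "P (emb_comp A (emb_comp K g g') f1) = P (emb_comp A (emb_comp K g g') f2)"
    unfolding a .
qed

lemma factor:
  assumes LLs: "L \<subseteq> Ls" and fb: "finite_BRDs L ar K"
    and brs: "big_ramsey_structure L ar Ls K Ks"
    and A: "A \<in> age L ar K" and g0: "g0 \<in> Emb L ar K K"
  shows "\<exists>g'\<in>Emb L ar K K. good L ar Ls K Ks P A (emb_comp K g0 g')"
proof -
  define t where "t = BRD L ar A K"
  have bt: "brd_bound L ar A K t"
  proof -
    obtain t0 where "brd_bound L ar A K t0" using fb A unfolding finite_BRDs_def by blast
    then show ?thesis unfolding t_def BRD_def by (rule LeastI)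
  qed
  obtain f0 where f0: "f0 \<in> Emb L ar A K" using A unfolding age_def by auto
  have wfA: "wf_struct L ar A" using A unfolding age_def by auto
  have exK: "is_expansion L ar Ls Ks K" using brs unfolding big_ramsey_structure_def by auto
  have t1: "1 \<le> t"
  proof -
    have "(\<lambda>_. 0::nat) ` Emb L ar A K \<subseteq> {..<t+1}" by auto
    then obtain g where g: "g \<in> Emb L ar K K"
      "card ((\<lambda>_. 0::nat) ` (emb_comp A g ` Emb L ar A K)) \<le> t"
      using bt[unfolded brd_bound_def, rule_format, of "t+1" "\<lambda>_. 0"] by auto
    have "emb_comp A g ` Emb L ar A K \<noteq> {}" using f0 by auto
    then have "(\<lambda>_. 0::nat) ` (emb_comp A g ` Emb L ar A K) = {0}" by auto
    then show ?thesis using g(2) by simp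
  qed
  define E where "E = exps L ar Ls Ks A"
  have cE: "card E = t" using brs A unfolding big_ramsey_structure_def E_def t_def by auto
  then have finE: "finite E" using t1 card.infinite by fastforce
  obtain idx where idx: "bij_betw idx E {0..<t}" using ex_bij_betw_finite_nat[OF finE] cE by auto
  define xd where "xd = (\<lambda>f. exp_dot Ls ar Ks A f)"
  define \<psi> where "\<psi> = (\<lambda>f. 2 * idx (xd (emb_comp A g0 f)) + (if P (emb_comp A g0 f) then 1 else 0::nat))"
  have inE: "xd (emb_comp A g0 f) \<in> E" if "f \<in> Emb L ar A K" for f
    unfolding xd_def E_def
    by (rule exp_dot_in_exps[OF LLs exK wfA emb_comp_Emb[OF that g0]])
  have idxlt: "idx e < t" if "e \<in> E" for e using idx that by (auto simp: bij_betw_def)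
  have psi_lt: "\<psi> f < 2 * t + 1" if "f \<in> Emb L ar A K" for f
    using idxlt[OF inE[OF that]] unfolding \<psi>_def by auto
  have "\<psi> ` Emb L ar A K \<subseteq> {..<2*t+1}" using psi_lt by auto
  moreover have "t < 2*t+1" by simp
  ultimately obtain g' where g': "g' \<in> Emb L ar K K"
    and cpsi: "card (\<psi> ` (emb_comp A g' ` Emb L ar A K)) \<le> t"
    using bt[unfolded brd_bound_def, rule_format, of "2*t+1" \<psi>] by blast
  define C where "C = emb_comp A g' ` Emb L ar A K"
  have CE: "C \<subseteq> Emb L ar A K" unfolding C_def using emb_comp_Emb[OF _ g'] by blast
  have gg: "emb_comp K g0 g' \<in> Emb L ar K K" using emb_comp_Emb[OF g' g0] .
  define D where "D = (\<lambda>c. xd (emb_comp A g0 c)) ` C"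
  have "xd ` (emb_comp A (emb_comp K g0 g') ` Emb L ar A K) = D"
    unfolding D_def C_def image_image
    by (intro image_cong refl) (simp add: emb_comp_assoc Emb_img)
  moreover have "card (xd ` (emb_comp A (emb_comp K g0 g') ` Emb L ar A K)) = t"
    using brs A gg cE unfolding big_ramsey_structure_def xd_def E_def by auto
  ultimately have cD: "card D = t" by simp
  have DE: "D \<subseteq> E" unfolding D_def using inE CE by auto
  have injD: "inj_on idx D" using idx DE by (auto simp: bij_betw_def inj_on_subset)
  have div: "\<psi> c div 2 = idx (xd (emb_comp A g0 c))" for c
    unfolding \<psi>_def by auto
  have "(\<lambda>m. m div 2) ` (\<psi> ` C) = idx ` D"
    unfolding D_def image_image div by simp
  then have c1: "card ((\<lambda>m. m div 2) ` (\<psi> ` C)) = t" using injD cD card_image by metis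
  have finP: "finite (\<psi> ` C)"
    by (rule finite_subset[of _ "{..<2*t+1}"]) (use psi_lt CE in auto)
  have "card ((\<lambda>m. m div 2) ` (\<psi> ` C)) \<le> card (\<psi> ` C)" using card_image_le finP by blast
  then have "card ((\<lambda>m. m div 2) ` (\<psi> ` C)) = card (\<psi> ` C)" using c1 cpsi C_def by simp
  then have injdiv: "inj_on (\<lambda>m. m div 2) (\<psi> ` C)" using inj_on_iff_eq_card finP by blast
  have "good L ar Ls K Ks P A (emb_comp K g0 g')"
    unfolding good_def
  proof (intro ballI impI)
    fix f1 f2 assume f: "f1 \<in> Emb L ar A K" "f2 \<in> Emb L ar A K"
      and e: "exp_dot Ls ar Ks A (emb_comp A (emb_comp K g0 g') f1) =
              exp_dot Ls ar Ks A (emb_comp A (emb_comp K g0 g') f2)"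
    define c1 where "c1 = emb_comp A g' f1"
    define c2 where "c2 = emb_comp A g' f2"
    have cC: "c1 \<in> C" "c2 \<in> C" unfolding c1_def c2_def C_def using f by auto
    have a: "emb_comp A (emb_comp K g0 g') f1 = emb_comp A g0 c1"
            "emb_comp A (emb_comp K g0 g') f2 = emb_comp A g0 c2"
      unfolding c1_def c2_def
      by (rule emb_comp_assoc[OF Emb_img[OF f(1)]], rule emb_comp_assoc[OF Emb_img[OF f(2)]])
    have "\<psi> c1 div 2 = \<psi> c2 div 2" unfolding div using e a xd_def by simp
    then have "\<psi> c1 = \<psi> c2" using injdiv cC by (auto dest: inj_onD)
    then have "\<psi> c1 mod 2 = \<psi> c2 mod 2" by simp
    moreover have "\<psi> c mod 2 = (if P (emb_comp A g0 c) then 1 else 0)" for c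
      unfolding \<psi>_def by simp
    ultimately have "P (emb_comp A g0 c1) = P (emb_comp A g0 c2)" by (simp split: if_splits)
    then show "P (emb_comp A (emb_comp K g0 g') f1) = P (emb_comp A (emb_comp K g0 g') f2)"
      using a by simp
  qed
  then show ?thesis using g' by blast
qed

lemma multi:
  assumes LLs: "L \<subseteq> Ls" and fb: "finite_BRDs L ar K"
    and brs: "big_ramsey_structure L ar Ls K Ks"
    and S: "finite S" "S \<subseteq> age L ar K"
  shows "\<exists>g\<in>Emb L ar K K. \<forall>A\<in>S. good L ar Ls K Ks P A g"
  using S
proof (induction S rule: finite_induct)
  case empty
  then show ?case using id_Emb by blast
next
  case (insert A S)
  then obtain g where g: "g \<in> Emb L ar K K" "\<forall>A\<in>S. good L ar Ls K Ks P A g" by auto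
  obtain g' where g': "g' \<in> Emb L ar K K" "good L ar Ls K Ks P A (emb_comp K g g')"
    using factor[OF LLs fb brs _ g(1), of A P] insert.prems by auto
  have "emb_comp K g g' \<in> Emb L ar K K" using emb_comp_Emb[OF g'(1) g(1)] .
  moreover have "\<forall>B\<in>insert A S. good L ar Ls K Ks P B (emb_comp K g g')"
    using g g' good_comp by blast
  ultimately show ?case by blast
qed

theorem corollary2p5:
  fixes L Ls :: "'r set" and ar :: "'r \<Rightarrow> nat"
    and K Ks :: "('a, 'r) struct"
  assumes "finite L"
    and "L \<subseteq> Ls"
    and "fraisse_limit L ar K"
    and "finite_BRDs L ar K"
    and "big_ramsey_structure L ar Ls K Ks"
    and "recurrent L ar Ls K Ks"
  shows "interprets_omega_order Ls Ks"
proof -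
  note finL = assms(1) and LLs = assms(2) and fl = assms(3) and fb = assms(4)
    and brs = assms(5) and rec = assms(6)
  have exK: "is_expansion L ar Ls Ks K" using brs unfolding big_ramsey_structure_def by auto
  have uK: "univ Ks = univ K" using exK by (simp add: is_expansion_def)
  have relL: "rel Ks r xs = rel K r xs" if "r \<in> L" for r xs
    using exK that by (simp add: is_expansion_def)
  have infK: "infinite (univ K)" and cK: "countable (univ K)"
    using fl by (auto simp: fraisse_limit_def)
  have wfK: "wf_struct L ar K" using fl by (simp add: fraisse_limit_def)
  have "infinite (UNIV :: 'a set)" by (rule infinite_super[OF subset_UNIV infK])
  then obtain x0 :: 'a where True by blast
  have "infinite (UNIV - {x0})" using \<open>infinite (UNIV :: 'a set)\<close> by simp
  then obtain y0 where "y0 \<in> UNIV - {x0}" using infinite_imp_nonempty by blast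
  then have xy: "x0 \<noteq> y0" by blast
  define X where "X = {x0, y0}"
  define T where "T = (SIGMA r:L. {xs. set xs \<subseteq> X \<and> length xs = ar r})"
  have finT: "finite T" unfolding T_def X_def
    using finL by (intro finite_SigmaI finite_lists_length_eq) auto
  define mk :: "('r \<times> 'a list) set \<Rightarrow> ('a, 'r) struct" where
    "mk U = (X, \<lambda>r xs. (r, xs) \<in> U)" for U
  have mk_univ: "univ (mk U) = X" for U by (simp add: mk_def univ_def)
  have mk_rel: "rel (mk U) r xs \<longleftrightarrow> (r, xs) \<in> U" for U r xs by (simp add: mk_def rel_def)
  define S where "S = mk ` Pow T \<inter> age L ar K"
  have finS: "finite S" unfolding S_def using finT by auto
  define n where "n = to_nat_on (univ K)"
  define P :: "('a \<Rightarrow> 'a) \<Rightarrow> bool" where "P f = (n (f x0) < n (f y0))" for f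
  obtain g where g: "g \<in> Emb L ar K K" and gS: "\<forall>A\<in>S. good L ar Ls K Ks P A g"
    using multi[OF LLs fb brs finS, of P] S_def by auto
  obtain e where e: "e \<in> Emb Ls ar Ks (exp_dot Ls ar Ks K g)"
    using rec g unfolding recurrent_def by auto
  have ue: "univ (exp_dot Ls ar Ks K g) = univ K" by (simp add: exp_dot_def univ_def)
  have rele: "rel (exp_dot Ls ar Ks K g) r xs \<longleftrightarrow>
      r \<in> Ls \<and> length xs = ar r \<and> set xs \<subseteq> univ K \<and> rel Ks r (map g xs)" for r xs
    by (simp add: exp_dot_def rel_def univ_def)
  have ei: "e \<in> extensional (univ K)" "e ` univ K \<subseteq> univ K" "inj_on e (univ K)"
    using e uK ue by (auto simp: Emb_def)
  have erel: "rel Ks r xs \<longleftrightarrow> rel Ks r (map g (map e xs))"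
    if "r \<in> Ls" "length xs = ar r" "set xs \<subseteq> univ K" for r xs
  proof -
    have "set (map e xs) \<subseteq> univ K" using that(3) ei(2) by auto
    then show ?thesis using e that uK unfolding Emb_def rele by auto
  qed
  have gi: "g ` univ K \<subseteq> univ K" "inj_on g (univ K)" using g by (auto simp: Emb_def)
  have eL: "e \<in> Emb L ar K K"
  proof -
    have "rel K r xs \<longleftrightarrow> rel K r (map e xs)"
      if "r \<in> L" "length xs = ar r" "set xs \<subseteq> univ K" for r xs
    proof -
      have s: "set (map e xs) \<subseteq> univ K" using that(3) ei(2) by auto
      have "rel K r xs \<longleftrightarrow> rel K r (map g (map e xs))"
        using erel[of r xs] that LLs relL by auto
      also have "\<dots> \<longleftrightarrow> rel K r (map e xs)"
        using g that s unfolding Emb_def by auto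
      finally show ?thesis .
    qed
    then show ?thesis using ei unfolding Emb_def by auto
  qed
  define h where "h = emb_comp K g e"
  have hL: "h \<in> Emb L ar K K" unfolding h_def using emb_comp_Emb[OF eL g] .
  have hS: "\<forall>A\<in>S. good L ar Ls K Ks P A h" unfolding h_def using gS good_comp[OF _ eL] by blast
  have hmap: "map h xs = map g (map e xs)" if "set xs \<subseteq> univ K" for xs
    using that by (auto simp: h_def emb_comp_def)
  have hrel: "rel Ks r (map h xs) \<longleftrightarrow> rel Ks r xs"
    if "r \<in> Ls" "length xs = ar r" "set xs \<subseteq> univ K" for r xs
    using erel[OF that] by (simp only: hmap[OF that(3)])
  have hi: "h ` univ K \<subseteq> univ K" "inj_on h (univ K)" using hL unfolding Emb_def by blast+
  define \<phi> where "\<phi> a = n (h a)" for a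
  have injphi: "inj_on \<phi> (univ K)"
  proof (rule inj_onI)
    fix x y assume xy: "x \<in> univ K" "y \<in> univ K" "\<phi> x = \<phi> y"
    then have "h x \<in> univ K" "h y \<in> univ K" using hi by auto
    then have "h x = h y" using xy(3) inj_on_to_nat_on[OF cK] unfolding \<phi>_def n_def
      by (meson inj_onD)
    then show "x = y" using hi(2) xy by (meson inj_onD)
  qed
  define less where "less a b = (\<phi> a < \<phi> b)" for a b
  obtain hh :: "nat \<Rightarrow> 'a" where hh: "bij_betw hh UNIV (univ K)" "\<forall>i j. i < j \<longleftrightarrow> \<phi> (hh i) < \<phi> (hh j)"
    by (rule omega_lemma[OF infK injphi]) iprover
  have defin: "less a b \<longleftrightarrow> less c d"
    if abcd: "a \<in> univ K" "b \<in> univ K" "c \<in> univ K" "d \<in> univ K"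
      and eq: "(a = b) \<longleftrightarrow> (c = d)"
      and hyp: "\<forall>r\<in>Ls. \<forall>xs. set xs \<subseteq> {a, b} \<longrightarrow>
               (rel Ks r xs \<longleftrightarrow> rel Ks r (map (\<lambda>x. if x = a then c else d) xs))"
    for a b c d
  proof (cases "a = b")
    case True
    then show ?thesis using eq less_def by simp
  next
    case False
    then have cd: "c \<noteq> d" using eq by simp
    define \<alpha> where "\<alpha> = restrict (\<lambda>z. if z = x0 then a else b) X"
    define \<beta> where "\<beta> = restrict (\<lambda>z. if z = x0 then c else d) X"
    define \<sigma> where "\<sigma> x = (if x = a then c else d)" for x
    define U0 where "U0 = {(r, xs) \<in> T. rel K r (map \<alpha> xs)}"
    define A0 where "A0 = mk U0"
    have mab: "map \<sigma> (map \<alpha> xs) = map \<beta> xs" if "set xs \<subseteq> X" for xs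
      using that False xy by (auto simp: \<sigma>_def \<alpha>_def \<beta>_def X_def)
    have sab: "set (map \<alpha> xs) \<subseteq> {a, b}" if "set xs \<subseteq> X" for xs
      using that by (auto simp: \<alpha>_def X_def)
    have relA0: "rel A0 r xs \<longleftrightarrow> rel K r (map \<alpha> xs)"
      if "r \<in> L" "length xs = ar r" "set xs \<subseteq> X" for r xs
      using that unfolding A0_def mk_rel U0_def T_def by auto
    have ab_eq: "rel K r (map \<alpha> xs) \<longleftrightarrow> rel K r (map \<beta> xs)"
      if "r \<in> L" "set xs \<subseteq> X" for r xs
    proof -
      have "r \<in> Ls" using that LLs by auto
      then have "rel Ks r (map \<alpha> xs) \<longleftrightarrow> rel Ks r (map \<sigma> (map \<alpha> xs))"
        using hyp sab[OF that(2)] unfolding \<sigma>_def by blast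
      then show ?thesis by (simp only: mab[OF that(2)] relL[OF that(1)])
    qed
    have ua: "univ A0 = X" by (simp add: A0_def mk_univ)
    have aE: "\<alpha> \<in> Emb L ar A0 K"
    proof -
      have "\<alpha> \<in> extensional X" by (simp add: \<alpha>_def)
      moreover have "\<alpha> ` X \<subseteq> univ K" using abcd by (auto simp: \<alpha>_def X_def)
      moreover have "inj_on \<alpha> X" using False xy by (auto simp: inj_on_def \<alpha>_def X_def)
      ultimately show ?thesis unfolding Emb_def ua using relA0 by blast
    qed
    have bE: "\<beta> \<in> Emb L ar A0 K"
    proof -
      have "\<beta> \<in> extensional X" by (simp add: \<beta>_def)
      moreover have "\<beta> ` X \<subseteq> univ K" using abcd by (auto simp: \<beta>_def X_def)
      moreover have "inj_on \<beta> X" using cd xy by (auto simp: inj_on_def \<beta>_def X_def)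
      moreover have "rel A0 r xs \<longleftrightarrow> rel K r (map \<beta> xs)"
        if "r \<in> L" "length xs = ar r" "set xs \<subseteq> X" for r xs
        using relA0[OF that] ab_eq[OF that(1,3)] by simp
      ultimately show ?thesis unfolding Emb_def ua by blast
    qed
    have wfA0: "wf_struct L ar A0"
      unfolding wf_struct_def ua unfolding A0_def mk_rel U0_def T_def by auto
    have "A0 \<in> age L ar K" unfolding age_def using wfA0 aE
      by (auto simp: ua X_def)
    moreover have "A0 \<in> mk ` Pow T" unfolding A0_def U0_def by auto
    ultimately have "A0 \<in> S" unfolding S_def by auto
    then have gd: "good L ar Ls K Ks P A0 h" using hS by auto
    have key: "rel Ks r (map (emb_comp A0 h \<alpha>) xs) \<longleftrightarrow> rel Ks r (map (emb_comp A0 h \<beta>) xs)"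
      if "r \<in> Ls" "length xs = ar r" "set xs \<subseteq> X" for r xs
    proof -
      have m1: "map (emb_comp A0 h \<alpha>) xs = map h (map \<alpha> xs)"
        "map (emb_comp A0 h \<beta>) xs = map h (map \<beta> xs)"
        using that(3) ua by (auto simp: emb_comp_def)
      have s1: "set (map \<alpha> xs) \<subseteq> univ K" "set (map \<beta> xs) \<subseteq> univ K"
        using that(3) abcd by (auto simp: \<alpha>_def \<beta>_def X_def)
      have l1: "length (map \<alpha> xs) = ar r" "length (map \<beta> xs) = ar r" using that(2) by simp_all
      have F: "rel Ks r (map \<alpha> xs) \<longleftrightarrow> rel Ks r (map \<sigma> (map \<alpha> xs))"
        using hyp sab[OF that(3)] that(1) unfolding \<sigma>_def by blast
      have "rel Ks r (map (emb_comp A0 h \<alpha>) xs) \<longleftrightarrow> rel Ks r (map \<alpha> xs)"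
        unfolding m1(1) by (rule hrel[OF that(1) l1(1) s1(1)])
      also have "\<dots> \<longleftrightarrow> rel Ks r (map \<beta> xs)" using F by (simp only: mab[OF that(3)])
      also have "\<dots> \<longleftrightarrow> rel Ks r (map (emb_comp A0 h \<beta>) xs)"
        unfolding m1(2) by (rule hrel[OF that(1) l1(2) s1(2), symmetric])
      finally show ?thesis .
    qed
    have "(\<lambda>r xs. r \<in> Ls \<and> length xs = ar r \<and> set xs \<subseteq> univ A0 \<and> rel Ks r (map (emb_comp A0 h \<alpha>) xs))
        = (\<lambda>r xs. r \<in> Ls \<and> length xs = ar r \<and> set xs \<subseteq> univ A0 \<and> rel Ks r (map (emb_comp A0 h \<beta>) xs))"
      unfolding ua using key by (intro ext) blast
    then have xdeq: "exp_dot Ls ar Ks A0 (emb_comp A0 h \<alpha>) = exp_dot Ls ar Ks A0 (emb_comp A0 h \<beta>)"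
      unfolding exp_dot_def by simp
    have "P (emb_comp A0 h \<alpha>) \<longleftrightarrow> P (emb_comp A0 h \<beta>)"
      using gd aE bE xdeq unfolding good_def by blast
    moreover have "emb_comp A0 h \<alpha> x0 = h a" "emb_comp A0 h \<alpha> y0 = h b"
        "emb_comp A0 h \<beta> x0 = h c" "emb_comp A0 h \<beta> y0 = h d"
      using xy by (simp_all add: emb_comp_def ua X_def \<alpha>_def \<beta>_def)
    ultimately show ?thesis by (simp add: P_def less_def \<phi>_def)
  qed
  have o1: "\<exists>h :: nat \<Rightarrow> 'a. bij_betw h UNIV (univ Ks) \<and> (\<forall>i j. i < j \<longleftrightarrow> less (h i) (h j))"
    unfolding uK less_def apply (rule exI[where x=hh]) using hh by (rule conjI)
  have o2: "\<forall>a\<in>univ Ks. \<forall>b\<in>univ Ks. \<forall>c\<in>univ Ks. \<forall>d\<in>univ Ks.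
           ((a = b) \<longleftrightarrow> (c = d)) \<and>
           (\<forall>r\<in>Ls. \<forall>xs. set xs \<subseteq> {a, b} \<longrightarrow>
               (rel Ks r xs \<longleftrightarrow> rel Ks r (map (\<lambda>x. if x = a then c else d) xs)))
           \<longrightarrow> (less a b \<longleftrightarrow> less c d)"
    unfolding uK by (intro ballI impI; erule conjE; rule defin; assumption)
  show ?thesis unfolding interprets_omega_order_def apply (rule exI[where x=less])
    using o1 o2 by (rule conjI)
qed

end
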